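(* Let $2\le d\le D$ be integers and $\bar d$ a sequence with $d\le d_i\le D$ for all $i$. There is a constant $C$ depending only on $D$ such that for all $n\ge2$, $$\beta_d\le\beta(n)\le\beta_D+\frac{C}{\log n},\qquad\text{where }\ \beta_x=\frac{\log x}{\log\frac{x^2}{x-1}}=\frac{1}{2-\frac{\log(x-1)}{\log x}}.$$
   Context: $p_i=\frac{d_i-1}{d_i^2}$, $k(n)=\min\{k\ge0:p_0p_1\cdots p_kn\le1\}$, $\beta(n)=\frac{\log(d_0d_1\cdots d_{k(n)})}{\log n}$. *)

theory Defs
  imports Complex_Main
begin

definition pfac :: "(nat \<Rightarrow> nat) \<Rightarrow> nat \<Rightarrow> real" where
  "pfac ds i = (real (ds i) - 1) / (real (ds i))^2"

definition kidx :: "(nat \<Rightarrow> nat) \<Rightarrow> nat \<Rightarrow> nat" where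
  "kidx ds n = (LEAST k. (\<Prod>i\<le>k. pfac ds i) * real n \<le> 1)"

definition betan :: "(nat \<Rightarrow> nat) \<Rightarrow> nat \<Rightarrow> real" where
  "betan ds n = ln (\<Prod>i\<le>kidx ds n. real (ds i)) / ln (real n)"

definition betax :: "real \<Rightarrow> real" where
  "betax x = ln x / ln (x^2 / (x - 1))"

end

theory Submission
  imports Defs
begin

definition hh :: "real \<Rightarrow> real" where "hh x = ln (x - 1) / ln x"

lemma hh_step:
  fixes x :: real assumes "2 \<le> x" shows "hh x \<le> hh (x + 1)"
proof -
  have u: "0 \<le> ln (x - 1)" using assms by simp
  have v: "0 \<le> ln (x + 1)" using assms by simp
  have lx: "0 < ln x" using assms by simp
  have lx1: "0 < ln (x + 1)" using assms by simp
  have "ln (x - 1) + ln (x + 1) = ln ((x - 1) * (x + 1))" using assms by (simp add: ln_mult)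
  also have "\<dots> \<le> ln (x * x)"
  proof -
    have "2*2 \<le> x*x" using assms by (intro mult_mono) auto
    then show ?thesis by (simp add: algebra_simps)
  qed
  also have "\<dots> = 2 * ln x" using assms by (simp add: ln_mult)
  finally have s: "ln (x - 1) + ln (x + 1) \<le> 2 * ln x" .
  have "ln (x - 1) * ln (x + 1) \<le> ((ln (x - 1) + ln (x + 1)) / 2)^2"
  proof -
    have "0 \<le> (ln (x - 1) - ln (x + 1))^2" by simp
    then show ?thesis by (simp add: power2_eq_square field_simps)
  qed
  also have "\<dots> \<le> (ln x)^2" using s u v by (intro power_mono) auto
  finally have k: "ln (x - 1) * ln (x + 1) \<le> ln x * ln x" by (simp add: power2_eq_square)
  show ?thesis unfolding hh_def using lx lx1 k
    by (simp add: divide_simps power2_eq_square algebra_simps)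
qed

lemma hh_mono:
  assumes "2 \<le> a" shows "hh (real a) \<le> hh (real (a + m))"
proof (induction m)
  case 0 then show ?case by simp
next
  case (Suc m)
  have "hh (real (a + m)) \<le> hh (real (a + m) + 1)" using assms by (intro hh_step) auto
  then show ?case using Suc by (simp add: add.commute)
qed

lemma hh_bounds: fixes x :: real assumes "2 \<le> x" shows "0 \<le> hh x" "hh x < 1"
  using assms unfolding hh_def by (auto simp: divide_simps)

lemma betax_eq:
  fixes x :: real assumes "2 \<le> x" shows "betax x = 1 / (2 - hh x)"
proof -
  have "ln (x^2 / (x - 1)) = 2 * ln x - ln (x - 1)"
    using assms by (simp add: ln_div ln_realpow)
  moreover have "0 < ln x" using assms by simp
  ultimately show ?thesis unfolding betax_def hh_def by (simp add: field_simps)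
qed

lemma betax_mono:
  assumes "2 \<le> a" "a \<le> b" shows "betax (real a) \<le> betax (real b)"
proof -
  obtain m where b: "b = a + m" using assms le_Suc_ex by blast
  have h: "hh (real a) \<le> hh (real b)" using hh_mono[OF assms(1)] b by simp
  have "hh (real b) < 1" using hh_bounds assms by simp
  then show ?thesis using h assms betax_eq[of "real a"] betax_eq[of "real b"]
    by (simp add: frac_le)
qed

lemma betax_pos: assumes "2 \<le> x" shows "0 \<le> betax x"
  using betax_eq[OF assms] hh_bounds[OF assms] by simp

lemma M_eq:
  fixes e :: nat assumes "2 \<le> e"
  shows "ln (real e) = betax (real e) * ln (real e ^ 2 / (real e - 1))"
    and "0 < ln (real e ^ 2 / (real e - 1))"
proof -
  have a: "ln (real e ^ 2 / (real e - 1)) = 2 * ln (real e) - ln (real e - 1)"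
    using assms by (simp add: ln_div ln_realpow)
  have "ln (real e - 1) < ln (real e)" using assms by simp
  moreover have "0 < ln (real e)" using assms by simp
  ultimately show p: "0 < ln (real e ^ 2 / (real e - 1))" using a by linarith
  then show "ln (real e) = betax (real e) * ln (real e ^ 2 / (real e - 1))"
    unfolding betax_def by simp
qed

lemma pfac_eq: assumes "2 \<le> ds i" shows "pfac ds i = 1 / (real (ds i) ^ 2 / (real (ds i) - 1))"
  using assms unfolding pfac_def by simp

lemma lnP:
  assumes "\<forall>i. 2 \<le> ds i"
  shows "ln (1 / (\<Prod>i\<le>k. pfac ds i)) = (\<Sum>i\<le>k. ln (real (ds i) ^ 2 / (real (ds i) - 1)))"
proof -
  have pos: "\<And>i. 0 < real (ds i) ^ 2 / (real (ds i) - 1)"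
  proof -
    fix i have "2 \<le> ds i" using assms by blast
    then show "0 < real (ds i) ^ 2 / (real (ds i) - 1)" by simp
  qed
  have "1 / (\<Prod>i\<le>k. pfac ds i) = (\<Prod>i\<le>k. real (ds i) ^ 2 / (real (ds i) - 1))"
    using assms by (simp add: pfac_eq prod_dividef)
  have ne: "\<And>i. real (ds i) ^ 2 / (real (ds i) - 1) \<noteq> 0" using pos by (metis less_irrefl)
  show ?thesis using ne by (simp add: ln_prod \<open>1 / _ = _\<close>)
qed

lemma kidx_ex:
  assumes "\<forall>i. 2 \<le> ds i"
  shows "(\<Prod>i\<le>kidx ds n. pfac ds i) * real n \<le> 1"
proof -
  have pf: "\<And>i. 0 \<le> pfac ds i \<and> pfac ds i \<le> 1/4"
  proof -
    fix i
    have d: "2 \<le> real (ds i)" using assms by (metis of_nat_le_iff of_nat_numeral)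
    have "4 * (real (ds i) - 1) \<le> real (ds i) ^ 2"
    proof -
      have "0 \<le> (real (ds i) - 2)^2" by simp
      then show ?thesis by (simp add: power2_eq_square algebra_simps)
    qed
    then show "0 \<le> pfac ds i \<and> pfac ds i \<le> 1/4" using d unfolding pfac_def
      by (auto simp: divide_simps)
  qed
  have "(\<Prod>i\<le>n. pfac ds i) \<le> (\<Prod>i\<le>n. (1/4::real))"
    using pf by (intro prod_mono) auto
  also have "\<dots> = (1/4)^(Suc n)" by simp
  finally have a: "(\<Prod>i\<le>n. pfac ds i) \<le> (1/4)^(Suc n)" .
  have "real n < 2 ^ n"
  proof (induction n)
    case (Suc m)
    have "1 \<le> (2::real)^m" by simp
    then show ?case using Suc by (simp only: of_nat_Suc power_Suc)
  qed simp
  also have "(2::real)^n \<le> 4^(Suc n)"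
  proof -
    have "(2::real)^n \<le> 4^n" by (rule power_mono) auto
    also have "\<dots> \<le> 4^Suc n" by simp
    finally show ?thesis .
  qed
  finally have b: "real n * (1/4)^(Suc n) \<le> 1" by (simp add: field_simps)
  have c: "(\<Prod>i\<le>n. pfac ds i) * real n \<le> 1"
  proof -
    have "(\<Prod>i\<le>n. pfac ds i) * real n \<le> (1/4)^(Suc n) * real n"
      using a by (rule mult_right_mono) simp
    then show ?thesis using b by (simp add: mult.commute)
  qed
  show ?thesis unfolding kidx_def by (rule LeastI[of _ n]) (rule c)
qed

theorem mainTheorem8:
  fixes D :: nat
  assumes "2 \<le> D"
  shows "\<exists>C::real. \<forall>(d::nat) (ds::nat \<Rightarrow> nat). 2 \<le> d \<longrightarrow> d \<le> D \<longrightarrow>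
           (\<forall>i. d \<le> ds i \<and> ds i \<le> D) \<longrightarrow>
           (\<forall>n::nat. 2 \<le> n \<longrightarrow>
              betax (real d) \<le> betan ds n \<and> betan ds n \<le> betax (real D) + C / ln (real n))"
  apply (rule exI[of _ "ln (real D)"])
proof (intro allI impI conjI)
  fix d :: nat and ds :: "nat \<Rightarrow> nat" and n :: nat
  assume d2: "2 \<le> d" and dD: "d \<le> D" and b: "\<forall>i. d \<le> ds i \<and> ds i \<le> D" and n2: "2 \<le> n"
  have ds2: "\<forall>i. 2 \<le> ds i" using b d2 by (meson order_trans)
  define M where "M i = ln (real (ds i) ^ 2 / (real (ds i) - 1))" for i
  define L where "L i = ln (real (ds i))" for i
  define k where "k = kidx ds n"
  have Mpos: "\<And>i. 0 < M i" unfolding M_def using ds2 M_eq(2) by blast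
  have LM: "\<And>i. L i = betax (real (ds i)) * M i" unfolding L_def M_def using ds2 M_eq(1) by blast
  have lnn: "0 < ln (real n)" using n2 by simp
  have Ppos: "\<And>j. 0 < (\<Prod>i\<le>j. pfac ds i)"
  proof -
    fix j
    have "\<And>a. 0 < pfac ds a"
    proof -
      fix a have "2 \<le> real (ds a)" using ds2 by (metis of_nat_le_iff of_nat_numeral)
      then show "0 < pfac ds a" unfolding pfac_def by simp
    qed
    then show "0 < (\<Prod>i\<le>j. pfac ds i)" by (intro prod_pos) auto
  qed
  have lnQ: "ln (\<Prod>i\<le>k. real (ds i)) = (\<Sum>i\<le>k. L i)"
  proof -
    have nz: "\<And>i. real (ds i) \<noteq> 0"
    proof -
      fix i have "2 \<le> ds i" using ds2 by blast
      then show "real (ds i) \<noteq> 0" by simp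
    qed
    show ?thesis unfolding L_def using nz by (subst ln_prod) auto
  qed
  have lnP: "\<And>j. ln (1 / (\<Prod>i\<le>j. pfac ds i)) = (\<Sum>i\<le>j. M i)"
    unfolding M_def using lnP[OF ds2] by blast
  have bd: "0 \<le> betax (real d)" using betax_pos d2 by simp
  have bD: "0 \<le> betax (real D)" using betax_pos assms by simp
  have kk: "(\<Prod>i\<le>k. pfac ds i) * real n \<le> 1" unfolding k_def using kidx_ex[OF ds2] .
  have "real n \<le> 1 / (\<Prod>i\<le>k. pfac ds i)" using kk Ppos[of k] by (simp add: field_simps)
  then have "ln (real n) \<le> ln (1 / (\<Prod>i\<le>k. pfac ds i))" using Ppos[of k] n2
    by (subst ln_le_cancel_iff) auto
  then have "ln (real n) \<le> (\<Sum>i\<le>k. M i)" using lnP[of k] by simp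
  then have "betax (real d) * ln (real n) \<le> betax (real d) * (\<Sum>i\<le>k. M i)"
    using bd by (rule mult_left_mono)
  also have "\<dots> = (\<Sum>i\<le>k. betax (real d) * M i)" by (simp add: sum_distrib_left)
  also have "\<dots> \<le> (\<Sum>i\<le>k. L i)"
  proof (rule sum_mono)
    fix i show "betax (real d) * M i \<le> L i" unfolding LM
      using betax_mono[of d "ds i"] d2 b Mpos[of i] by (intro mult_right_mono) auto
  qed
  finally have "betax (real d) * ln (real n) \<le> ln (\<Prod>i\<le>k. real (ds i))" using lnQ by simp
  then show "betax (real d) \<le> betan ds n" unfolding betan_def k_def[symmetric]
    using lnn by (simp add: field_simps)
  have LD: "\<And>i. L i \<le> ln (real D)" unfolding L_def using b ds2
  proof -
    fix i have "2 \<le> ds i" "ds i \<le> D" using ds2 b by auto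
    then show "ln (real (ds i)) \<le> ln (real D)" by (subst ln_le_cancel_iff) auto
  qed
  have LM2: "\<And>i. L i \<le> betax (real D) * M i" unfolding LM
    using betax_mono[of _ D] ds2 b Mpos by (intro mult_right_mono) (auto simp: less_imp_le)
  have up: "(\<Sum>i\<le>k. L i) \<le> betax (real D) * ln (real n) + ln (real D)"
  proof (cases k)
    case 0
    have "0 \<le> betax (real D) * ln (real n)" using bD lnn by simp
    then show ?thesis using LD[of 0] 0 by simp
  next
    case (Suc j)
    have "\<not> (\<Prod>i\<le>j. pfac ds i) * real n \<le> 1"
      using Suc unfolding k_def kidx_def by (intro not_less_Least) simp
    then have "1 / (\<Prod>i\<le>j. pfac ds i) < real n" using Ppos[of j] by (simp add: field_simps)
    then have "ln (1 / (\<Prod>i\<le>j. pfac ds i)) < ln (real n)" using Ppos[of j] n2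
      by (subst ln_less_cancel_iff) auto
    then have "(\<Sum>i\<le>j. M i) < ln (real n)" using lnP[of j] by simp
    then have "betax (real D) * (\<Sum>i\<le>j. M i) \<le> betax (real D) * ln (real n)"
      using bD by (intro mult_left_mono) auto
    moreover have "(\<Sum>i\<le>j. L i) \<le> betax (real D) * (\<Sum>i\<le>j. M i)"
      unfolding sum_distrib_left using LM2 by (rule sum_mono)
    moreover have "(\<Sum>i\<le>k. L i) = (\<Sum>i\<le>j. L i) + L k" using Suc by simp
    ultimately show ?thesis using LD[of k] by linarith
  qed
  show "betan ds n \<le> betax (real D) + ln (real D) / ln (real n)"
    unfolding betan_def k_def[symmetric] lnQ using up lnn by (simp add: field_simps)
qed

end
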